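(* Assume $a/b>\sqrt2$. For every self-intersected 4-periodic $P_1P_2P_3P_4$ (any parameter $u$ with $|u|\le u_{\max}$), the signed area of the polygon $P_1P_2P_3P_4$ is $0$, and the signed area of its outer polygon (whenever the outer polygon is defined) is also $0$.
   Context: The elliptic billiard is $\mathcal{E}: x^2/a^2+y^2/b^2=1$, $a>b>0$, $c=\sqrt{a^2-b^2}$. For $a/b>\sqrt2$ the self-intersected 4-periodics (closed 4-bounce billiard trajectories tangent to the confocal hyperbola $x^2/a''^2-y^2/b''^2=1$, $a''=a\sqrt{a^2-2b^2}/c$, $b''=b^2/c$) are parametrized by $u$ with $|u|\le u_{\max}:=\frac{a}{c^2}\sqrt{a^2-2b^2}$: $P_1=(au,\,b\sqrt{1-u^2})$, $P_3=(-au,\,b\sqrt{1-u^2})$, $P_2=\left(-\frac{a\sqrt{a^2(a^2-2b^2)-c^4u^2}}{c^2\sqrt{1-u^2}},\,-\frac{b^3}{c^2\sqrt{1-u^2}}\right)$, $P_4=\left(\frac{a\sqrt{a^2(a^2-2b^2)-c^4u^2}}{c^2\sqrt{1-u^2}},\,-\frac{b^3}{c^2\sqrt{1-u^2}}\right)$. The outer polygon has vertices $P_i'$, $i=1,\dots,4$, where $P_i'$ is the intersection of the tangent lines to $\mathcal{E}$ at $P_i$ and $P_{i+1}$ (indices mod 4). The signed area of a closed polygon $Q_1\dots Q_N$ with $Q_i=(x_i,y_i)$ is $\frac12\sum_{i=1}^N (x_iy_{i+1}-x_{i+1}y_i)$ (indices mod $N$). *)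

theory Defs
  imports Complex_Main
begin

type_synonym pt = "real \<times> real"

definition signed_area :: "pt list \<Rightarrow> real" where
  "signed_area Q = (let N = length Q in
     (1/2) * (\<Sum>i<N. fst (Q ! i) * snd (Q ! ((i+1) mod N))
                    - fst (Q ! ((i+1) mod N)) * snd (Q ! i)))"

definition ell_c :: "real \<Rightarrow> real \<Rightarrow> real" where
  "ell_c a b = sqrt (a^2 - b^2)"

definition u_max :: "real \<Rightarrow> real \<Rightarrow> real" where
  "u_max a b = a / (ell_c a b)^2 * sqrt (a^2 - 2*b^2)"

definition P4 :: "real \<Rightarrow> real \<Rightarrow> real \<Rightarrow> nat \<Rightarrow> pt" where
  "P4 a b u i = (let c = ell_c a b;
       X = a * sqrt (a^2 * (a^2 - 2*b^2) - c^4 * u^2) / (c^2 * sqrt (1 - u^2));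
       Y = - (b^3 / (c^2 * sqrt (1 - u^2))) in
     if i = 1 then (a*u, b * sqrt (1 - u^2))
     else if i = 2 then (-X, Y)
     else if i = 3 then (-a*u, b * sqrt (1 - u^2))
     else (X, Y))"

definition tangent_line :: "real \<Rightarrow> real \<Rightarrow> pt \<Rightarrow> pt set" where
  "tangent_line a b p = {q. fst q * fst p / a^2 + snd q * snd p / b^2 = 1}"

definition tangents_meet :: "real \<Rightarrow> real \<Rightarrow> pt \<Rightarrow> pt \<Rightarrow> bool" where
  "tangents_meet a b p q = (\<exists>!r. r \<in> tangent_line a b p \<inter> tangent_line a b q)"

definition tangent_intersection :: "real \<Rightarrow> real \<Rightarrow> pt \<Rightarrow> pt \<Rightarrow> pt" where
  "tangent_intersection a b p q = (THE r. r \<in> tangent_line a b p \<inter> tangent_line a b q)"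

definition succ4 :: "nat \<Rightarrow> nat" where "succ4 i = (if i = 4 then 1 else i + 1)"

definition outer_defined :: "real \<Rightarrow> real \<Rightarrow> real \<Rightarrow> bool" where
  "outer_defined a b u = (\<forall>i\<in>{1..4}. tangents_meet a b (P4 a b u i) (P4 a b u (succ4 i)))"

definition outer_vertex :: "real \<Rightarrow> real \<Rightarrow> real \<Rightarrow> nat \<Rightarrow> pt" where
  "outer_vertex a b u i = tangent_intersection a b (P4 a b u i) (P4 a b u (succ4 i))"

end

theory Submission
  imports Defs
begin

definition rf :: "pt \<Rightarrow> pt" where "rf p = (- fst p, snd p)"

lemma succ4_vals: "succ4 1 = 2" "succ4 2 = 3" "succ4 3 = 4" "succ4 4 = 1"
  by (simp_all add: succ4_def)

lemma rf_rf[simp]: "rf (rf p) = p" by (simp add: rf_def)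

lemma tl_rf: "r \<in> tangent_line a b (rf p) \<longleftrightarrow> rf r \<in> tangent_line a b p"
  by (simp add: tangent_line_def rf_def)

lemma ti_rf:
  assumes "tangents_meet a b p q"
  shows "tangent_intersection a b (rf p) (rf q) = rf (tangent_intersection a b p q)"
proof -
  let ?P = "\<lambda>r. r \<in> tangent_line a b p \<inter> tangent_line a b q"
  from assms obtain r0 where r0: "?P r0" and un: "\<And>r. ?P r \<Longrightarrow> r = r0"
    unfolding tangents_meet_def by blast
  have "(THE r. r \<in> tangent_line a b (rf p) \<inter> tangent_line a b (rf q)) = rf r0"
  proof (rule the_equality)
    show "rf r0 \<in> tangent_line a b (rf p) \<inter> tangent_line a b (rf q)"
      using r0 by (simp add: tl_rf)
  next
    fix r assume "r \<in> tangent_line a b (rf p) \<inter> tangent_line a b (rf q)"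
    then have "?P (rf r)" by (simp add: tl_rf)
    then have "rf r = r0" by (rule un)
    then show "r = rf r0" by (metis rf_rf)
  qed
  moreover have "(THE r. ?P r) = r0" using r0 un by blast
  ultimately show ?thesis unfolding tangent_intersection_def by simp
qed

lemma sa4: "signed_area [A,B,C,D] = (1/2) * ((fst A * snd B - fst B * snd A) + (fst B * snd C - fst C * snd B) + (fst C * snd D - fst D * snd C) + (fst D * snd A - fst A * snd D))"
proof -
  have "{..<4::nat} = {0,1,2,3}" by auto
  then show ?thesis by (simp add: signed_area_def)
qed
lemma area4: "signed_area [(p,q),(r,s),(-p,q),(-r,s)] = 0"
  by (simp add: sa4 algebra_simps)


theorem mainTheorem2:
  fixes a b u :: real
  assumes "a > b" and "b > 0" and "a / b > sqrt 2"
    and "\<bar>u\<bar> \<le> u_max a b"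
  shows "signed_area (map (P4 a b u) [1,2,3,4]) = 0
    \<and> (outer_defined a b u \<longrightarrow> signed_area (map (outer_vertex a b u) [1,2,3,4]) = 0)"
proof
  have p3: "P4 a b u 3 = rf (P4 a b u 1)" and p4: "P4 a b u 4 = rf (P4 a b u 2)"
    by (simp_all add: P4_def rf_def Let_def)
  have e: "\<And>x. x = (fst x, snd x)" by simp
  show "signed_area (map (P4 a b u) [1,2,3,4]) = 0"
    using area4[of "fst (P4 a b u 1)" "snd (P4 a b u 1)" "fst (P4 a b u 2)" "snd (P4 a b u 2)"]
    by (simp add: p3 p4 rf_def)
  show "outer_defined a b u \<longrightarrow> signed_area (map (outer_vertex a b u) [1,2,3,4]) = 0"
  proof
    assume od: "outer_defined a b u"
    have m1: "tangents_meet a b (P4 a b u 1) (P4 a b u 2)"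
    proof -
      have "(1::nat) \<in> {1..4}" by simp
      from bspec[OF od[unfolded outer_defined_def] this] show ?thesis by (simp only: succ4_vals)
    qed
    have m2: "tangents_meet a b (P4 a b u 2) (P4 a b u 3)"
    proof -
      have "(2::nat) \<in> {1..4}" by simp
      from bspec[OF od[unfolded outer_defined_def] this] show ?thesis by (simp only: succ4_vals)
    qed
    have o3: "outer_vertex a b u 3 = rf (outer_vertex a b u 1)"
      unfolding outer_vertex_def succ4_vals using ti_rf[OF m1] by (simp add: p3 p4)
    have o4: "outer_vertex a b u 4 = rf (outer_vertex a b u 2)"
    proof -
      have "outer_vertex a b u 4 = tangent_intersection a b (rf (P4 a b u 2)) (rf (P4 a b u 3))"
        unfolding outer_vertex_def succ4_vals by (simp add: p3 p4)
      also have "\<dots> = rf (outer_vertex a b u 2)"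
        using ti_rf[OF m2] by (simp add: outer_vertex_def succ4_vals)
      finally show ?thesis .
    qed
    show "signed_area (map (outer_vertex a b u) [1,2,3,4]) = 0"
      using area4[of "fst (outer_vertex a b u 1)" "snd (outer_vertex a b u 1)"
          "fst (outer_vertex a b u 2)" "snd (outer_vertex a b u 2)"]
      by (simp add: o3 o4 rf_def)
  qed
qed

end
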